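(* Let $(X,d)\in\mathfrak U$ with $|X|\geqslant 2$, and suppose the diametral graph is $G_d=G[X_1,X_2]$ (complete bipartite with parts $X_1,X_2$). Considering the subspaces $(X_1,d)$ and $(X_2,d)$, we have $$\operatorname{Sp}(X)=\operatorname{Sp}(X_1)\cup\operatorname{Sp}(X_2)\cup\{\operatorname{diam}X\}$$ and $$\operatorname{Sp}(X_1)\cap\operatorname{Sp}(X_2)=\varnothing.$$
   Context: For a metric space $(X,d)$, $\operatorname{Sp}(X)=\{d(x,y): x,y\in X,\ x\neq y\}$ (empty for a one-point space) and $\operatorname{diam}X=\sup\{d(x,y):x,y\in X\}$. $\mathfrak U$ denotes the class of finite ultrametric spaces $X$ with $|\operatorname{Sp}(X)|=|X|-1$. The diametral graph $G_d$ of $(X,d)$ has vertex set $X$, with $\{u,v\}$ an edge iff $d(u,v)=\operatorname{diam}X$. $G[X_1,X_2]$ denotes the complete bipartite graph with parts $X_1,X_2$ (disjoint, nonempty, covering the vertex set; no edges inside a part, all edges between parts). *)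

theory Defs
  imports Complex_Main
begin

definition metric_on :: "'a set \<Rightarrow> ('a \<Rightarrow> 'a \<Rightarrow> real) \<Rightarrow> bool" where
  "metric_on X d \<longleftrightarrow>
     (\<forall>x\<in>X. \<forall>y\<in>X. d x y \<ge> 0 \<and> (d x y = 0 \<longleftrightarrow> x = y) \<and> d x y = d y x) \<and>
     (\<forall>x\<in>X. \<forall>y\<in>X. \<forall>z\<in>X. d x z \<le> d x y + d y z)"

definition ultrametric_on :: "'a set \<Rightarrow> ('a \<Rightarrow> 'a \<Rightarrow> real) \<Rightarrow> bool" where
  "ultrametric_on X d \<longleftrightarrow> metric_on X d \<and>
     (\<forall>x\<in>X. \<forall>y\<in>X. \<forall>z\<in>X. d x z \<le> max (d x y) (d y z))"

definition Sp :: "'a set \<Rightarrow> ('a \<Rightarrow> 'a \<Rightarrow> real) \<Rightarrow> real set" where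
  "Sp X d = {d x y | x y. x \<in> X \<and> y \<in> X \<and> x \<noteq> y}"

definition diam_on :: "'a set \<Rightarrow> ('a \<Rightarrow> 'a \<Rightarrow> real) \<Rightarrow> real" where
  "diam_on X d = Sup {d x y | x y. x \<in> X \<and> y \<in> X}"

definition class_U :: "'a set \<Rightarrow> ('a \<Rightarrow> 'a \<Rightarrow> real) \<Rightarrow> bool" where
  "class_U X d \<longleftrightarrow> finite X \<and> X \<noteq> {} \<and> ultrametric_on X d \<and> card (Sp X d) = card X - 1"

definition diametral_edge :: "'a set \<Rightarrow> ('a \<Rightarrow> 'a \<Rightarrow> real) \<Rightarrow> 'a \<Rightarrow> 'a \<Rightarrow> bool" where
  "diametral_edge X d u v \<longleftrightarrow> u \<in> X \<and> v \<in> X \<and> u \<noteq> v \<and> d u v = diam_on X d"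

definition complete_bipartite :: "'a set \<Rightarrow> ('a \<Rightarrow> 'a \<Rightarrow> bool) \<Rightarrow> 'a set \<Rightarrow> 'a set \<Rightarrow> bool" where
  "complete_bipartite X E X1 X2 \<longleftrightarrow>
     X1 \<noteq> {} \<and> X2 \<noteq> {} \<and> X1 \<inter> X2 = {} \<and> X1 \<union> X2 = X \<and>
     (\<forall>u\<in>X. \<forall>v\<in>X. E u v \<longleftrightarrow> ((u \<in> X1 \<and> v \<in> X2) \<or> (u \<in> X2 \<and> v \<in> X1)))"

end

theory Submission
  imports Defs
begin

lemma Sp_finite: "finite Y \<Longrightarrow> finite (Sp Y d)"
proof -
  assume f: "finite Y"
  have "Sp Y d \<subseteq> (\<lambda>(x,y). d x y) ` (Y \<times> Y)" unfolding Sp_def by auto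
  thus ?thesis using f by (meson finite_SigmaI finite_imageI finite_subset)
qed

lemma Sp_mono: "A \<subseteq> B \<Longrightarrow> Sp A d \<subseteq> Sp B d"
  unfolding Sp_def by blast

lemma ultra_sub: "ultrametric_on Y d \<Longrightarrow> Z \<subseteq> Y \<Longrightarrow> ultrametric_on Z d"
  unfolding ultrametric_on_def metric_on_def by blast

lemma Sp_card_aux:
  "\<forall>Y. card Y = n \<longrightarrow> finite Y \<longrightarrow> Y \<noteq> {} \<longrightarrow> ultrametric_on Y d \<longrightarrow> card (Sp Y d) \<le> card Y - 1"
proof (induction n rule: less_induct)
  case (less n)
  show ?case
  proof (intro allI impI)
    fix Y assume cY: "card Y = n" and fY: "finite Y" and ne: "Y \<noteq> {}" and um: "ultrametric_on Y d"
    show "card (Sp Y d) \<le> card Y - 1"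
    proof (cases "Sp Y d = {}")
      case True thus ?thesis by simp
    next
      case False
      have fS: "finite (Sp Y d)" using Sp_finite fY .
      define m where "m = Min (Sp Y d)"
      have "m \<in> Sp Y d" using False fS m_def by simp
      then obtain a b where ab: "a \<in> Y" "b \<in> Y" "a \<noteq> b" "d a b = m" unfolding Sp_def by blast
      have mmin: "\<And>x y. x \<in> Y \<Longrightarrow> y \<in> Y \<Longrightarrow> x \<noteq> y \<Longrightarrow> m \<le> d x y"
        using fS m_def unfolding Sp_def by (auto intro!: Min_le)
      have sym: "\<And>x y. x \<in> Y \<Longrightarrow> y \<in> Y \<Longrightarrow> d x y = d y x"
        using um unfolding ultrametric_on_def metric_on_def by blast
      have ul: "\<And>x y z. x \<in> Y \<Longrightarrow> y \<in> Y \<Longrightarrow> z \<in> Y \<Longrightarrow> d x z \<le> max (d x y) (d y z)"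
        using um unfolding ultrametric_on_def by blast
      define Y' where "Y' = Y - {a}"
      have key: "\<And>z. z \<in> Y \<Longrightarrow> z \<noteq> a \<Longrightarrow> z \<noteq> b \<Longrightarrow> d a z = d b z"
      proof -
        fix z assume z: "z \<in> Y" "z \<noteq> a" "z \<noteq> b"
        have "d a z \<le> max (d a b) (d b z)" using ul ab z by blast
        moreover have "m \<le> d b z" using mmin ab z by blast
        moreover have "d b z \<le> max (d b a) (d a z)" using ul ab z by blast
        moreover have "m \<le> d a z" using mmin ab z by blast
        moreover have "d b a = m" using sym ab by metis
        ultimately show "d a z = d b z" using ab by linarith
      qed
      have sub: "Sp Y d \<subseteq> insert m (Sp Y' d)"
      proof
        fix t assume "t \<in> Sp Y d"
        then obtain x y where xy: "x \<in> Y" "y \<in> Y" "x \<noteq> y" "t = d x y" unfolding Sp_def by blast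
        show "t \<in> insert m (Sp Y' d)"
        proof (cases "x = a \<or> y = a")
          case False thus ?thesis using xy unfolding Sp_def Y'_def by blast
        next
          case True
          then obtain z where z: "z \<in> Y" "z \<noteq> a" "t = d a z"
            using xy sym by metis
          show ?thesis
          proof (cases "z = b")
            case True thus ?thesis using z ab by simp
          next
            case False
            hence "t = d b z" using key z by simp
            thus ?thesis using z False ab unfolding Sp_def Y'_def by blast
          qed
        qed
      qed
      have Y'ne: "Y' \<noteq> {}" using ab Y'_def by blast
      have cY': "card Y' = n - 1" using cY ab fY Y'_def by simp
      have "n \<ge> 1" using cY fY ne by (metis Suc_leI card_gt_0_iff One_nat_def)
      hence "card Y' < n" using cY' by simp
      moreover have "finite Y'" using fY Y'_def by simp
      moreover have "ultrametric_on Y' d" using ultra_sub um Y'_def by blast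
      ultimately have IH: "card (Sp Y' d) \<le> card Y' - 1" using less Y'ne by blast
      have "card (Sp Y d) \<le> card (insert m (Sp Y' d))"
        using sub by (meson Sp_finite \<open>finite Y'\<close> card_mono finite_insert)
      also have "\<dots> \<le> Suc (card (Sp Y' d))" by (simp add: card_insert_le_m1)
      moreover have "card Y' > 0" using Y'ne \<open>finite Y'\<close> by (simp add: card_gt_0_iff)
      ultimately show ?thesis using IH cY' cY by linarith
    qed
  qed
qed

lemma Sp_card: "finite Y \<Longrightarrow> Y \<noteq> {} \<Longrightarrow> ultrametric_on Y d \<Longrightarrow> card (Sp Y d) \<le> card Y - 1"
  using Sp_card_aux by blast

theorem lemma6:
  fixes X X1 X2 :: "'a set" and d :: "'a \<Rightarrow> 'a \<Rightarrow> real"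
  assumes "class_U X d"
    and "card X \<ge> 2"
    and "complete_bipartite X (diametral_edge X d) X1 X2"
  shows "Sp X d = Sp X1 d \<union> Sp X2 d \<union> {diam_on X d} \<and> Sp X1 d \<inter> Sp X2 d = {}"
proof -
  define D where "D = diam_on X d"
  have fX: "finite X" and um: "ultrametric_on X d" and cU: "card (Sp X d) = card X - 1"
    using assms(1) unfolding class_U_def by auto
  have cb: "X1 \<noteq> {}" "X2 \<noteq> {}" "X1 \<inter> X2 = {}" "X1 \<union> X2 = X"
    and E: "\<And>u v. u \<in> X \<Longrightarrow> v \<in> X \<Longrightarrow> diametral_edge X d u v \<longleftrightarrow> ((u \<in> X1 \<and> v \<in> X2) \<or> (u \<in> X2 \<and> v \<in> X1))"
    using assms(3) unfolding complete_bipartite_def by blast+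
  have cross: "\<And>u v. u \<in> X1 \<Longrightarrow> v \<in> X2 \<Longrightarrow> d u v = D"
    using E cb unfolding diametral_edge_def D_def by blast
  have cross2: "\<And>u v. u \<in> X2 \<Longrightarrow> v \<in> X1 \<Longrightarrow> d u v = D"
    using E cb unfolding diametral_edge_def D_def by blast
  have in1: "\<And>u v. u \<in> X1 \<Longrightarrow> v \<in> X1 \<Longrightarrow> u \<noteq> v \<Longrightarrow> d u v \<noteq> D"
    using E cb unfolding diametral_edge_def D_def by blast
  have in2: "\<And>u v. u \<in> X2 \<Longrightarrow> v \<in> X2 \<Longrightarrow> u \<noteq> v \<Longrightarrow> d u v \<noteq> D"
    using E cb unfolding diametral_edge_def D_def by blast
  have eq: "Sp X d = Sp X1 d \<union> Sp X2 d \<union> {D}"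
  proof
    show "Sp X d \<subseteq> Sp X1 d \<union> Sp X2 d \<union> {D}"
    proof
      fix t assume "t \<in> Sp X d"
      then obtain x y where xy: "x \<in> X" "y \<in> X" "x \<noteq> y" "t = d x y" unfolding Sp_def by blast
      show "t \<in> Sp X1 d \<union> Sp X2 d \<union> {D}"
        using xy cb cross cross2 unfolding Sp_def by blast
    qed
  next
    obtain u v where "u \<in> X1" "v \<in> X2" using cb by blast
    hence "D \<in> Sp X d" using cross cb unfolding Sp_def by blast
    moreover have "Sp X1 d \<subseteq> Sp X d" using Sp_mono[of X1 X d] cb(4) by blast
    moreover have "Sp X2 d \<subseteq> Sp X d" using Sp_mono[of X2 X d] cb(4) by blast
    ultimately show "Sp X1 d \<union> Sp X2 d \<union> {D} \<subseteq> Sp X d" by blast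
  qed
  have notD: "D \<notin> Sp X1 d \<union> Sp X2 d" using in1 in2 unfolding Sp_def by blast
  have f1: "finite X1" "finite X2" using fX cb by auto
  have fS: "finite (Sp X1 d)" "finite (Sp X2 d)" using Sp_finite f1 by auto
  have c1: "card (Sp X1 d) \<le> card X1 - 1" using Sp_card[OF f1(1) cb(1) ultra_sub[OF um]] cb(4) by blast
  have c2: "card (Sp X2 d) \<le> card X2 - 1" using Sp_card[OF f1(2) cb(2) ultra_sub[OF um]] cb(4) by blast
  have k1: "card X1 \<ge> 1" "card X2 \<ge> 1" using f1 cb by (auto simp: Suc_leI card_gt_0_iff)
  have cX: "card X = card X1 + card X2" using cb f1 card_Un_disjoint by metis
  have "card (Sp X d) = Suc (card (Sp X1 d \<union> Sp X2 d))"
    using eq notD fS by (simp add: Un_commute[of _ "{D}"])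
  hence cu: "card (Sp X1 d \<union> Sp X2 d) = card X1 + card X2 - 2" using cU cX by simp
  have "card (Sp X1 d \<union> Sp X2 d) + card (Sp X1 d \<inter> Sp X2 d) = card (Sp X1 d) + card (Sp X2 d)"
    using card_Un_Int fS by metis
  hence "card (Sp X1 d \<inter> Sp X2 d) = 0" using cu c1 c2 k1 by linarith
  hence "Sp X1 d \<inter> Sp X2 d = {}" using fS by simp
  thus ?thesis using eq D_def by simp
qed

end
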